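(* Let $Q$ be a quiver, let $C\subseteq\Bbbk Q$ be a monomial subcoalgebra, and let $I\subseteq C$ be a left $C^*$-submodule of $C$ that embeds (as a left $C^*$-module) in a free left $C^*$-module. Let $e\in I$ be a vertex. Then there exists a path $p\in C$ such that: (i) for every path $q\in I$ starting at $e$, $p=qp'$ for some path $p'\in C$; (ii) for every non-trivial path $r\in C$ ending at $e$, $rp\notin C$.
   Context: $\Bbbk$ is a field. The path coalgebra $\Bbbk Q$ has basis all paths of $Q$ (including trivial paths, identified with vertices), with $\Delta(p)=\sum_{xy=p}x\otimes y$ where $xy$ denotes concatenation ($x$ followed by $y$, defined when the target of $x$ is the source of $y$), and $\varepsilon(p)=1$ if $p$ is trivial, $0$ otherwise. A subcoalgebra $C\subseteq\Bbbk Q$ is monomial if it contains all vertices and arrows of $Q$ and has a linear basis consisting of paths. The dual algebra $C^*$ has product $(fg)(x)=\sum f(x_1)g(x_2)$ and $C$ is a left $C^*$-module via $f\rightharpoonup x=\sum x_1f(x_2)$. *)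

theory Defs
  imports Main
begin

text \<open>Quiver: vertex type 'v, arrow type 'a, source map s, target map t.
A path is represented as (start vertex, list of arrows); the trivial path at v is (v, []).\<close>

type_synonym ('v,'a) path = "'v \<times> 'a list"

definition is_path :: "('a \<Rightarrow> 'v) \<Rightarrow> ('a \<Rightarrow> 'v) \<Rightarrow> ('v,'a) path \<Rightarrow> bool" where
  "is_path s t p \<longleftrightarrow>
     (snd p = [] \<or> s (hd (snd p)) = fst p) \<and>
     (\<forall>i. Suc i < length (snd p) \<longrightarrow> t (snd p ! i) = s (snd p ! Suc i))"

definition src :: "('v,'a) path \<Rightarrow> 'v" where
  "src p = fst p"

definition tgt :: "('a \<Rightarrow> 'v) \<Rightarrow> ('v,'a) path \<Rightarrow> 'v" where
  "tgt t p = (if snd p = [] then fst p else t (last (snd p)))"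

text \<open>Concatenation xy: x followed by y (meaningful when tgt x = src y).\<close>
definition pconcat :: "('v,'a) path \<Rightarrow> ('v,'a) path \<Rightarrow> ('v,'a) path" where
  "pconcat x y = (fst x, snd x @ snd y)"

text \<open>Vectors of kQ are finitely supported functions on paths; the basis vector of a path.\<close>
definition bvec :: "'p \<Rightarrow> 'p \<Rightarrow> 'k::field" where
  "bvec q = (\<lambda>p. if p = q then 1 else 0)"

definition vadd :: "('p \<Rightarrow> 'k::field) \<Rightarrow> ('p \<Rightarrow> 'k) \<Rightarrow> 'p \<Rightarrow> 'k" where
  "vadd x y = (\<lambda>p. x p + y p)"

definition vsmult :: "'k::field \<Rightarrow> ('p \<Rightarrow> 'k) \<Rightarrow> 'p \<Rightarrow> 'k" where
  "vsmult c x = (\<lambda>p. c * x p)"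

definition lin_span :: "('p \<Rightarrow> 'k::field) set \<Rightarrow> ('p \<Rightarrow> 'k) set" where
  "lin_span S = {(\<lambda>p. \<Sum>v\<in>F. c v * v p) | F c. finite F \<and> F \<subseteq> S}"

definition subspace :: "('p \<Rightarrow> 'k::field) set \<Rightarrow> bool" where
  "subspace S \<longleftrightarrow> (\<lambda>_. 0) \<in> S \<and> (\<forall>x\<in>S. \<forall>y\<in>S. vadd x y \<in> S) \<and> (\<forall>c. \<forall>x\<in>S. vsmult c x \<in> S)"

definition pathcoalg :: "('a \<Rightarrow> 'v) \<Rightarrow> ('a \<Rightarrow> 'v) \<Rightarrow> (('v,'a) path \<Rightarrow> 'k::field) set" where
  "pathcoalg s t = {x. finite {p. x p \<noteq> 0} \<and> (\<forall>p. x p \<noteq> 0 \<longrightarrow> is_path s t p)}"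

text \<open>Comultiplication, with kQ \<otimes> kQ identified with finitely supported functions on pairs of paths:
  Delta(x)(a,b) = coefficient of a \<otimes> b in Delta(x) = x(ab).\<close>
definition comul :: "('a \<Rightarrow> 'v) \<Rightarrow> ('a \<Rightarrow> 'v) \<Rightarrow> (('v,'a) path \<Rightarrow> 'k::field)
    \<Rightarrow> ('v,'a) path \<times> ('v,'a) path \<Rightarrow> 'k" where
  "comul s t x = (\<lambda>(a,b). if is_path s t a \<and> is_path s t b \<and> tgt t a = src b
                          then x (pconcat a b) else 0)"

definition tensor2 :: "('p \<Rightarrow> 'k::field) set \<Rightarrow> ('p \<Rightarrow> 'k) set \<Rightarrow> ('p \<times> 'p \<Rightarrow> 'k) set" where
  "tensor2 C D = lin_span {(\<lambda>(a,b). x a * y b) | x y. x \<in> C \<and> y \<in> D}"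

definition monomial_subcoalg :: "('a \<Rightarrow> 'v) \<Rightarrow> ('a \<Rightarrow> 'v) \<Rightarrow> (('v,'a) path \<Rightarrow> 'k::field) set \<Rightarrow> bool" where
  "monomial_subcoalg s t C \<longleftrightarrow>
     C \<subseteq> pathcoalg s t \<and> subspace C \<and>
     comul s t ` C \<subseteq> tensor2 C C \<and>
     (\<forall>v. bvec (v, []) \<in> C) \<and> (\<forall>\<alpha>. bvec (s \<alpha>, [\<alpha>]) \<in> C) \<and>
     (\<exists>P. (\<forall>p\<in>P. is_path s t p) \<and> C = lin_span (bvec ` P))"

text \<open>The dual algebra C^*: linear functionals on C (represented as extended by 0 outside C).\<close>
definition cdual :: "(('v,'a) path \<Rightarrow> 'k::field) set \<Rightarrow> ((('v,'a) path \<Rightarrow> 'k) \<Rightarrow> 'k) set" where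
  "cdual C = {f. (\<forall>x\<in>C. \<forall>y\<in>C. f (vadd x y) = f x + f y) \<and>
                 (\<forall>c. \<forall>x\<in>C. f (vsmult c x) = c * f x) \<and>
                 (\<forall>x. x \<notin> C \<longrightarrow> f x = 0)}"

definition decomps :: "('a \<Rightarrow> 'v) \<Rightarrow> ('a \<Rightarrow> 'v) \<Rightarrow> (('v,'a) path \<Rightarrow> 'k::field)
    \<Rightarrow> (('v,'a) path \<times> ('v,'a) path) set" where
  "decomps s t x = {(a,b). is_path s t a \<and> is_path s t b \<and> tgt t a = src b \<and> x (pconcat a b) \<noteq> 0}"

text \<open>Product in C^*: (fg)(x) = sum f(x1) g(x2).\<close>
definition conv :: "('a \<Rightarrow> 'v) \<Rightarrow> ('a \<Rightarrow> 'v) \<Rightarrow> (('v,'a) path \<Rightarrow> 'k::field) set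
    \<Rightarrow> ((('v,'a) path \<Rightarrow> 'k) \<Rightarrow> 'k) \<Rightarrow> ((('v,'a) path \<Rightarrow> 'k) \<Rightarrow> 'k)
    \<Rightarrow> (('v,'a) path \<Rightarrow> 'k) \<Rightarrow> 'k" where
  "conv s t C f g = (\<lambda>x. if x \<in> C then
      (\<Sum>(a,b)\<in>decomps s t x. x (pconcat a b) * f (bvec a) * g (bvec b)) else 0)"

text \<open>Left action of C^* on C: f \<rightharpoonup> x = sum x1 f(x2).\<close>
definition act :: "('a \<Rightarrow> 'v) \<Rightarrow> ('a \<Rightarrow> 'v) \<Rightarrow> ((('v,'a) path \<Rightarrow> 'k::field) \<Rightarrow> 'k)
    \<Rightarrow> (('v,'a) path \<Rightarrow> 'k) \<Rightarrow> ('v,'a) path \<Rightarrow> 'k" where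
  "act s t f x = (\<lambda>a. \<Sum>(a',b)\<in>{(a',b). (a',b) \<in> decomps s t x \<and> a' = a}.
                        x (pconcat a b) * f (bvec b))"

definition left_submodule :: "('a \<Rightarrow> 'v) \<Rightarrow> ('a \<Rightarrow> 'v) \<Rightarrow> (('v,'a) path \<Rightarrow> 'k::field) set
    \<Rightarrow> (('v,'a) path \<Rightarrow> 'k) set \<Rightarrow> bool" where
  "left_submodule s t C I \<longleftrightarrow> I \<subseteq> C \<and> subspace I \<and> (\<forall>f\<in>cdual C. \<forall>x\<in>I. act s t f x \<in> I)"

text \<open>The free left C^*-module with basis indexed by J (finitely supported families in C^*).\<close>
definition free_mod :: "(('v,'a) path \<Rightarrow> 'k::field) set \<Rightarrow> 'j set
    \<Rightarrow> ('j \<Rightarrow> (('v,'a) path \<Rightarrow> 'k) \<Rightarrow> 'k) set" where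
  "free_mod C J = {u. (\<forall>j. u j \<in> cdual C) \<and> (\<forall>j. j \<notin> J \<longrightarrow> u j = (\<lambda>_. 0)) \<and>
                      finite {j. u j \<noteq> (\<lambda>_. 0)}}"

definition embeds_in_free :: "('a \<Rightarrow> 'v) \<Rightarrow> ('a \<Rightarrow> 'v) \<Rightarrow> (('v,'a) path \<Rightarrow> 'k::field) set
    \<Rightarrow> (('v,'a) path \<Rightarrow> 'k) set \<Rightarrow> 'j set \<Rightarrow> bool" where
  "embeds_in_free s t C I J \<longleftrightarrow> (\<exists>\<phi>.
      \<phi> ` I \<subseteq> free_mod C J \<and> inj_on \<phi> I \<and>
      (\<forall>x\<in>I. \<forall>y\<in>I. \<phi> (vadd x y) = (\<lambda>j z. \<phi> x j z + \<phi> y j z)) \<and>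
      (\<forall>f\<in>cdual C. \<forall>x\<in>I. \<phi> (act s t f x) = (\<lambda>j. conv s t C f (\<phi> x j))))"

end

theory Submission
  imports Defs
begin

definition dl :: "(('v,'a) path \<Rightarrow> 'k::field) set \<Rightarrow> ('v,'a) path \<Rightarrow> (('v,'a) path \<Rightarrow> 'k) \<Rightarrow> 'k" where
  "dl C w = (\<lambda>x. if x \<in> C then x w else 0)"

lemma dl_cdual: "subspace C \<Longrightarrow> dl C w \<in> cdual C"
  unfolding cdual_def subspace_def dl_def vadd_def vsmult_def by auto

lemma bvec_nz: "(bvec a b :: 'k::field) \<noteq> 0 \<longleftrightarrow> b = a"
  by (simp add: bvec_def)

lemma dl_bvec: "dl C w (bvec a :: _ \<Rightarrow> 'k::field) \<noteq> 0 \<Longrightarrow> a = w \<and> bvec a \<in> C"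
  unfolding dl_def by (auto simp: bvec_def split: if_splits)

lemma sum_zero_pairs: "(\<And>a b. (a,b) \<in> S \<Longrightarrow> F a b = 0) \<Longrightarrow> (\<Sum>(a,b)\<in>S. F a b) = 0"
  by (rule sum.neutral) auto

lemma L1:
  assumes "is_path s t q" "bvec q \<in> C"
  shows "act s t (dl C q) (bvec q :: _ \<Rightarrow> 'k::field) = bvec (fst q, [])" (is "?L = ?R")
proof (rule ext)
  fix a
  show "?L a = ?R a"
  proof (cases "a = (fst q, [])")
    case True
    have S: "{(a',b). (a',b) \<in> decomps s t (bvec q :: _ \<Rightarrow> 'k) \<and> a' = a} = {(a, q)}"
      using True assms(1)
      by (auto simp: decomps_def pconcat_def bvec_def is_path_def tgt_def src_def split: if_splits)
    show ?thesis unfolding act_def S using True assms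
      by (simp add: pconcat_def bvec_def dl_def)
  next
    case False
    have "(\<Sum>(a',b)\<in>{(a',b). (a',b) \<in> decomps s t (bvec q :: _ \<Rightarrow> 'k) \<and> a' = a}.
                        bvec q (pconcat a b) * dl C q (bvec b)) = 0"
    proof (rule sum_zero_pairs)
      fix a' b assume "(a', b) \<in> {(a',b). (a',b) \<in> decomps s t (bvec q :: _ \<Rightarrow> 'k) \<and> a' = a}"
      hence "a' = a" by simp
      show "(bvec q (pconcat a b) :: 'k) * dl C q (bvec b) = 0"
      proof (rule ccontr)
        assume "(bvec q (pconcat a b) :: 'k) * dl C q (bvec b) \<noteq> 0"
        hence "pconcat a b = q" "b = q" using dl_bvec[of C q b] by (auto simp: bvec_nz)
        thus False using False by (cases a, cases q, auto simp: pconcat_def)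
      qed
    qed
    thus ?thesis using False unfolding act_def by (simp add: bvec_def)
  qed
qed

lemma L2:
  assumes "snd r \<noteq> []"
  shows "act s t (dl C r) (bvec (e, []) :: _ \<Rightarrow> 'k::field) = (\<lambda>_. 0)" (is "?L = _")
proof (rule ext)
  fix a
  show "?L a = 0"
    unfolding act_def
  proof (rule sum_zero_pairs)
    fix a' b assume "(a', b) \<in> {(a',b). (a',b) \<in> decomps s t (bvec (e,[]) :: _ \<Rightarrow> 'k) \<and> a' = a}"
    hence "a' = a" by simp
    show "(bvec (e,[]) (pconcat a b) :: 'k) * dl C r (bvec b) = 0"
    proof (rule ccontr)
      assume "(bvec (e,[]) (pconcat a b) :: 'k) * dl C r (bvec b) \<noteq> 0"
      hence "pconcat a b = (e,[])" "b = r" using dl_bvec[of C r b] by (auto simp: bvec_nz)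
      thus False using assms by (auto simp: pconcat_def)
    qed
  qed
qed

lemma finite_decomps: "finite (decomps s t (bvec w :: _ \<Rightarrow> 'k::field))"
proof -
  let ?f = "\<lambda>k. ((fst w, take k (snd w)), (tgt t (fst w, take k (snd w)), drop k (snd w)))"
  have "decomps s t (bvec w :: _ \<Rightarrow> 'k) \<subseteq> ?f ` {..length (snd w)}"
  proof clarify
    fix a b assume "(a, b) \<in> decomps s t (bvec w :: _ \<Rightarrow> 'k)"
    hence h: "pconcat a b = w" "tgt t a = src b" by (auto simp: decomps_def bvec_nz)
    obtain a1 a2 b1 b2 where ab: "a = (a1,a2)" "b = (b1,b2)" by (cases a, cases b)
    have "(a, b) = ?f (length a2)" using h ab by (cases w, auto simp: pconcat_def src_def)
    moreover have "length a2 \<le> length (snd w)" using h ab by (cases w, auto simp: pconcat_def)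
    ultimately show "(a, b) \<in> ?f ` {..length (snd w)}" by auto
  qed
  thus ?thesis by (rule finite_subset) auto
qed

lemma L3:
  assumes "bvec (pconcat r z) \<in> C" "is_path s t r" "is_path s t z" "tgt t r = src z" "bvec r \<in> C"
  shows "conv s t C (dl C r) g (bvec (pconcat r z) :: _ \<Rightarrow> 'k::field) = g (bvec z)"
proof -
  let ?D = "decomps s t (bvec (pconcat r z) :: _ \<Rightarrow> 'k)"
  let ?F = "\<lambda>(a,b). (bvec (pconcat r z) (pconcat a b) :: 'k) * dl C r (bvec a) * g (bvec b)"
  have mem: "(r,z) \<in> ?D" using assms by (simp add: decomps_def bvec_def)
  have "sum ?F ?D = ?F (r,z) + sum ?F (?D - {(r,z)})"
    by (rule sum.remove[OF finite_decomps mem])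
  moreover have "sum ?F (?D - {(r,z)}) = 0"
  proof (rule sum_zero_pairs)
    fix a b assume "(a, b) \<in> ?D - {(r,z)}"
    hence ab: "(a, b) \<in> ?D" "(a, b) \<noteq> (r, z)" by auto
    show "(bvec (pconcat r z) (pconcat a b) :: 'k) * dl C r (bvec a) * g (bvec b) = 0"
    proof (rule ccontr)
      assume "(bvec (pconcat r z) (pconcat a b) :: 'k) * dl C r (bvec a) * g (bvec b) \<noteq> 0"
      hence "pconcat a b = pconcat r z" "a = r" using dl_bvec[of C r a] by (auto simp: bvec_nz)
      moreover have "tgt t a = src b" using ab by (simp add: decomps_def)
      ultimately have "b = z" using assms(4) by (cases b, cases z, auto simp: pconcat_def src_def)
      thus False using ab \<open>a = r\<close> by simp
    qed
  qed
  ultimately show ?thesis using assms unfolding conv_def by (simp add: bvec_def dl_def)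
qed

lemma L4:
  assumes "conv s t C f h x \<noteq> 0"
  shows "x \<in> C \<and> (\<exists>(a,b)\<in>decomps s t x. x (pconcat a b) * f (bvec a) * h (bvec b) \<noteq> 0)"
proof -
  have "x \<in> C" using assms by (auto simp: conv_def split: if_splits)
  moreover have "(\<Sum>(a,b)\<in>decomps s t x. x (pconcat a b) * f (bvec a) * h (bvec b)) \<noteq> 0"
    using assms calculation by (simp add: conv_def)
  then obtain ab where "ab \<in> decomps s t x" "(\<lambda>(a,b). x (pconcat a b) * f (bvec a) * h (bvec b)) ab \<noteq> 0"
    using sum.not_neutral_contains_not_neutral by blast
  ultimately show ?thesis by (cases ab) force
qed

lemma L5:
  assumes "g \<in> cdual C" "subspace C" "finite F" "F \<subseteq> C"
  shows "(\<lambda>p. \<Sum>v\<in>F. c v * v p) \<in> C \<and> g (\<lambda>p. \<Sum>v\<in>F. c v * v p) = (\<Sum>v\<in>F. c v * g v)"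
  using assms(3,4)
proof (induction F rule: finite_induct)
  case empty
  have z: "(\<lambda>_. 0) \<in> C" using assms(2) by (simp add: subspace_def)
  have "g (vsmult 0 (\<lambda>_. 0)) = 0 * g (\<lambda>_. 0)" using assms(1) z by (simp add: cdual_def)
  hence "g (\<lambda>_. 0) = 0" by (simp add: vsmult_def)
  then show ?case using z by simp
next
  case (insert v F)
  let ?R = "\<lambda>p. \<Sum>v\<in>F. c v * v p"
  have R: "?R \<in> C" "g ?R = (\<Sum>v\<in>F. c v * g v)" using insert by auto
  have v: "v \<in> C" using insert by auto
  have sv: "vsmult (c v) v \<in> C" using assms(2) v by (simp add: subspace_def)
  have eq: "(\<lambda>p. \<Sum>v\<in>insert v F. c v * v p) = vadd (vsmult (c v) v) ?R"
    using insert by (simp add: vadd_def vsmult_def)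
  have "vadd (vsmult (c v) v) ?R \<in> C" using assms(2) sv R by (simp add: subspace_def)
  moreover have "g (vadd (vsmult (c v) v) ?R) = c v * g v + g ?R"
    using assms(1) sv R v by (simp add: cdual_def)
  ultimately show ?case using eq R insert by simp
qed

theorem lemma4p5:
  fixes s t :: "'a \<Rightarrow> 'v"
    and C I :: "(('v,'a) path \<Rightarrow> 'k::field) set"
    and J :: "'j set"
    and e :: 'v
  assumes "monomial_subcoalg s t C"
    and "left_submodule s t C I"
    and "embeds_in_free s t C I J"
    and "bvec (e, []) \<in> I"
  shows "\<exists>p. is_path s t p \<and> bvec p \<in> C \<and>
    (\<forall>q. is_path s t q \<and> bvec q \<in> I \<and> src q = e \<longrightarrow>
        (\<exists>p'. is_path s t p' \<and> bvec p' \<in> C \<and> tgt t q = src p' \<and> p = pconcat q p')) \<and>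
    (\<forall>r. is_path s t r \<and> bvec r \<in> C \<and> snd r \<noteq> [] \<and> tgt t r = e \<longrightarrow>
        bvec (pconcat r p) \<notin> C)"
proof -
  have subC: "subspace C" and CP: "C \<subseteq> pathcoalg s t"
    and span: "\<exists>P. (\<forall>p\<in>P. is_path s t p) \<and> C = lin_span (bvec ` P)"
    using assms(1) by (auto simp: monomial_subcoalg_def)
  have IC: "I \<subseteq> C" and subI: "subspace I" using assms(2) by (auto simp: left_submodule_def)
  obtain \<phi> where phiF: "\<phi> ` I \<subseteq> free_mod C J" and inj: "inj_on \<phi> I"
    and add: "\<forall>x\<in>I. \<forall>y\<in>I. \<phi> (vadd x y) = (\<lambda>j z. \<phi> x j z + \<phi> y j z)"
    and lin: "\<forall>f\<in>cdual C. \<forall>x\<in>I. \<phi> (act s t f x) = (\<lambda>j. conv s t C f (\<phi> x j))"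
    using assms(3) unfolding embeds_in_free_def by blast
  define Z :: "('v,'a) path \<Rightarrow> 'k" where "Z = (\<lambda>_. 0)"
  have ZI: "Z \<in> I" using subI by (simp add: subspace_def Z_def)
  have "\<phi> (vadd Z Z) = (\<lambda>j z. \<phi> Z j z + \<phi> Z j z)" using add ZI by blast
  moreover have "vadd Z Z = Z" by (simp add: vadd_def Z_def)
  ultimately have "\<And>j z. \<phi> Z j z = \<phi> Z j z + \<phi> Z j z" by metis
  hence "\<And>j z. \<phi> Z j z = 0" by (metis add_cancel_right_right)
  hence phiZ: "\<phi> Z = (\<lambda>j z. 0)" by (intro ext) simp
  define \<epsilon> where "\<epsilon> = (e, [] :: 'a list)"
  have epsI: "bvec \<epsilon> \<in> I" using assms(4) by (simp add: \<epsilon>_def)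
  have "bvec \<epsilon> \<noteq> Z" unfolding Z_def by (metis bvec_nz one_neq_zero bvec_def)
  hence "\<phi> (bvec \<epsilon>) \<noteq> \<phi> Z" using inj epsI ZI by (meson inj_on_eq_iff)
  then obtain j where j: "\<phi> (bvec \<epsilon>) j \<noteq> (\<lambda>_. 0)" using phiZ by fastforce
  define g where "g = \<phi> (bvec \<epsilon>) j"
  have phicd: "\<And>x. x \<in> I \<Longrightarrow> \<phi> x j \<in> cdual C" using phiF by (auto simp: free_mod_def)
  have gcd: "g \<in> cdual C" using phicd epsI by (simp add: g_def)
  obtain x where gx: "g x \<noteq> 0" using j g_def by fastforce
  have xC: "x \<in> C" using gx gcd by (auto simp: cdual_def)
  obtain P where P: "C = lin_span (bvec ` P)" using span by blast
  obtain F c where Fc: "x = (\<lambda>p. \<Sum>v\<in>F. c v * v p)" "finite F" "F \<subseteq> bvec ` P"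
    using xC P unfolding lin_span_def by blast
  have FC: "F \<subseteq> C"
  proof
    fix v assume "v \<in> F"
    then have "v \<in> bvec ` P" using Fc by auto
    moreover have "\<And>w. w \<in> bvec ` P \<Longrightarrow> w \<in> C"
    proof -
      fix w :: "('v,'a) path \<Rightarrow> 'k" assume "w \<in> bvec ` P"
      have "(\<lambda>p. \<Sum>v\<in>{w}. (\<lambda>_. 1::'k) v * v p) \<in> lin_span (bvec ` P)"
        unfolding lin_span_def
        by (rule CollectI, rule exI[of _ "{w}"], rule exI[of _ "\<lambda>_. 1::'k"]) (use \<open>w \<in> bvec ` P\<close> in auto)
      thus "w \<in> C" using P by simp
    qed
    ultimately show "v \<in> C" by blast
  qed
  have "(\<Sum>v\<in>F. c v * g v) \<noteq> 0" using L5[OF gcd subC Fc(2) FC, of c] gx Fc(1) by simp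
  then obtain v where "v \<in> F" "c v * g v \<noteq> 0" using sum.not_neutral_contains_not_neutral by blast
  then obtain z where gz: "g (bvec z) \<noteq> 0" using Fc(3) by auto
  have zC: "bvec z \<in> C" using gz gcd by (auto simp: cdual_def)
  have "(bvec z :: _ \<Rightarrow> 'k) \<in> pathcoalg s t" using zC CP by blast
  hence "bvec z z \<noteq> (0::'k) \<longrightarrow> is_path s t z" unfolding pathcoalg_def by blast
  hence zP: "is_path s t z" by (simp add: bvec_def)
  have main: "\<exists>p'. is_path s t p' \<and> bvec p' \<in> C \<and> tgt t q = src p' \<and> z = pconcat q p'"
    if q: "is_path s t q" "bvec q \<in> I" "src q = e" for q
  proof -
    have qC: "bvec q \<in> C" using q IC by auto
    have dcd: "dl C q \<in> cdual C" using dl_cdual[OF subC] .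
    have "act s t (dl C q) (bvec q) = bvec \<epsilon>"
      using L1[OF q(1) qC] q(3) by (simp add: \<epsilon>_def src_def)
    hence "\<phi> (bvec \<epsilon>) = (\<lambda>j. conv s t C (dl C q) (\<phi> (bvec q) j))"
      using lin dcd q(2) by metis
    hence "conv s t C (dl C q) (\<phi> (bvec q) j) (bvec z) \<noteq> 0" using gz g_def by metis
    from L4[OF this] obtain a b where ab: "(a,b) \<in> decomps s t (bvec z :: _ \<Rightarrow> 'k)"
      "bvec z (pconcat a b) * dl C q (bvec a) * \<phi> (bvec q) j (bvec b) \<noteq> 0" by force
    have hcd: "\<phi> (bvec q) j \<in> cdual C" using phicd q(2) .
    have "pconcat a b = z" "a = q" "bvec b \<in> C"
      using ab(2) dl_bvec[of C q a] hcd by (auto simp: bvec_nz cdual_def)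
    moreover have "is_path s t b" "tgt t a = src b" using ab(1) by (auto simp: decomps_def)
    ultimately show ?thesis by blast
  qed
  have epsP: "is_path s t \<epsilon>" by (simp add: \<epsilon>_def is_path_def)
  from main[OF epsP epsI] obtain b where "z = pconcat \<epsilon> b" by (auto simp: \<epsilon>_def src_def)
  hence srcz: "src z = e" by (simp add: \<epsilon>_def pconcat_def src_def)
  have part2: "bvec (pconcat r z) \<notin> C"
    if r: "is_path s t r" "bvec r \<in> C" "snd r \<noteq> []" "tgt t r = e" for r
  proof
    assume rz: "bvec (pconcat r z) \<in> C"
    have dcd: "dl C r \<in> cdual C" using dl_cdual[OF subC] .
    have "act s t (dl C r) (bvec \<epsilon>) = Z" using L2[OF r(3)] by (simp add: \<epsilon>_def Z_def)
    hence "\<phi> Z = (\<lambda>j. conv s t C (dl C r) (\<phi> (bvec \<epsilon>) j))" using lin dcd epsI by metis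
    hence "conv s t C (dl C r) g = (\<lambda>_. 0)" using phiZ g_def by metis
    moreover have "conv s t C (dl C r) g (bvec (pconcat r z)) = g (bvec z)"
      using L3[OF rz r(1) zP _ r(2)] r(4) srcz by simp
    ultimately show False using gz by simp
  qed
  show ?thesis using zP zC main part2 by blast
qed

end
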